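(* Let $u=s_{i_1}\cdots s_{i_l}$ and $v=s_{j_1}\cdots s_{j_m}$ be reduced words for glides in $\hat S_n$ such that $s_{j_1}\cdots s_{j_m}s_{i_1}\cdots s_{i_l}$ is reduced. In the wiring diagram of $v|u$, write $i\triangleleft j$ if wires $i$ and $j$ cross with $j$ the upper wire of the crossing. Then there exist real numbers $\alpha_1,\dots,\alpha_n$ such that $\alpha_i<\alpha_j$ whenever $i\triangleleft j$.
   Context: $\hat S_n$ is the affine symmetric group with generators $s_0,\dots,s_{n-1}$ (indices mod $n$) and relations $s_i^2=1$, $s_is_js_i=s_js_is_j$ if $i-j\equiv\pm1$, $s_is_j=s_js_i$ if $i-j\not\equiv0,\pm1\pmod n$; $\phi:\hat S_n\to S_n$ sends $s_i\mapsto(i\ i+1)$ ($1\le i\le n-1$), $s_0\mapsto(1\ n)$; a glide of offset $k\in\{0,\dots,n-1\}$ is an element $g$ with $\phi(g)(j)\equiv j+k\pmod n$ for all $j$. A word is drawn as a wiring diagram left to right on a cylinder with $n$ wires in positions $1,\dots,n$ (mod $n$); a letter $s_i$ is a crossing of the wires in positions $i$ and $i+1$ ($s_0$: positions $n$ and $1$). The upper wire of a crossing $s_i$ is the one passing from position $i+1$ to position $i$ (for $s_0$: from position $1$ to position $n$). In the diagram of $v|u$ (the word $vu$ with a cut between $v$ and $u$), wire number $i$ is the wire occupying position $i$ at the cut. *)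

theory Defs
  imports Complex_Main
begin

(* Letters of words are natural numbers p < n, standing for s_p. *)

definition adj :: "nat \<Rightarrow> nat \<Rightarrow> nat \<Rightarrow> bool" where
  "adj n i j \<longleftrightarrow> (i + 1) mod n = j mod n \<or> (j + 1) mod n = i mod n"

inductive word_equiv :: "nat \<Rightarrow> nat list \<Rightarrow> nat list \<Rightarrow> bool" for n where
  refl: "word_equiv n w w"
| sym: "word_equiv n a b \<Longrightarrow> word_equiv n b a"
| trans: "word_equiv n a b \<Longrightarrow> word_equiv n b c \<Longrightarrow> word_equiv n a c"
| cong: "word_equiv n a b \<Longrightarrow> word_equiv n (x @ a @ y) (x @ b @ y)"
| square: "i < n \<Longrightarrow> word_equiv n [i, i] []"
| braid: "i < n \<Longrightarrow> j < n \<Longrightarrow> adj n i j \<Longrightarrow> word_equiv n [i, j, i] [j, i, j]"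
| comm: "i < n \<Longrightarrow> j < n \<Longrightarrow> i \<noteq> j \<Longrightarrow> \<not> adj n i j \<Longrightarrow> word_equiv n [i, j] [j, i]"

definition reduced :: "nat \<Rightarrow> nat list \<Rightarrow> bool" where
  "reduced n w \<longleftrightarrow> set w \<subseteq> {..<n} \<and>
     (\<forall>w'. set w' \<subseteq> {..<n} \<and> word_equiv n w w' \<longrightarrow> length w \<le> length w')"

definition lowpos :: "nat \<Rightarrow> nat \<Rightarrow> nat" where
  "lowpos n p = (if p = 0 then n else p)"
definition highpos :: "nat \<Rightarrow> nat \<Rightarrow> nat" where
  "highpos n p = (if p = 0 then 1 else p + 1)"

(* phi(s_p) as a permutation of {1..n}: (p p+1) for p \<ge> 1, (1 n) for p = 0 *)
definition tr :: "nat \<Rightarrow> nat \<Rightarrow> nat \<Rightarrow> nat" where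
  "tr n p x = (if x = lowpos n p then highpos n p
               else if x = highpos n p then lowpos n p else x)"

definition phi_word :: "nat \<Rightarrow> nat list \<Rightarrow> nat \<Rightarrow> nat" where
  "phi_word n w = foldr (\<lambda>p f. tr n p \<circ> f) w id"

definition is_glide :: "nat \<Rightarrow> nat list \<Rightarrow> bool" where
  "is_glide n w \<longleftrightarrow> (\<exists>k < n. \<forall>j \<in> {1..n}. phi_word n w j mod n = (j + k) mod n)"

(* Wiring diagram of v|u: state t maps a position to the wire (numbered by its
   position at the cut) occupying it just left of the t-th letter of v @ u. *)
definition wstate :: "nat \<Rightarrow> nat list \<Rightarrow> nat list \<Rightarrow> nat \<Rightarrow> nat \<Rightarrow> nat" where
  "wstate n v u t = phi_word n (rev v) \<circ> phi_word n (take t (v @ u))"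

definition wire_below :: "nat \<Rightarrow> nat list \<Rightarrow> nat list \<Rightarrow> nat \<Rightarrow> nat \<Rightarrow> bool" where
  "wire_below n v u i j \<longleftrightarrow>
     (\<exists>t < length (v @ u).
        wstate n v u t (lowpos n ((v @ u) ! t)) = i \<and>
        wstate n v u t (highpos n ((v @ u) ! t)) = j)"

end

theory Submission
  imports Defs
begin


definition sg :: "nat \<Rightarrow> nat \<Rightarrow> int \<Rightarrow> int" where
 "sg n p x = (if x mod int n = int p then x + 1 else if (x - 1) mod int n = int p then x - 1 else x)"

definition F :: "nat \<Rightarrow> nat list \<Rightarrow> int \<Rightarrow> int" where
 "F n w = foldr (\<lambda>p f. sg n p \<circ> f) w id"

lemma F_Nil[simp]: "F n [] = id" by (simp add: F_def)
lemma F_Cons[simp]: "F n (p # w) = sg n p \<circ> F n w" by (simp add: F_def)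
lemma F_append[simp]: "F n (a @ b) = F n a \<circ> F n b"
  by (induction a) auto

lemma modeq: "(0::int) < N \<Longrightarrow> (a mod N = b mod N) \<longleftrightarrow> (N dvd a - b)"
  by (simp add: mod_eq_dvd_iff)

lemma small_dvd: "(3::int) \<le> N \<Longrightarrow> N dvd d \<Longrightarrow> -2 \<le> d \<Longrightarrow> d \<le> 2 \<Longrightarrow> d = 0"
proof (rule ccontr)
  assume a: "3 \<le> N" "N dvd d" "-2 \<le> d" "d \<le> 2" "d \<noteq> 0"
  have "N dvd \<bar>d\<bar>" using a by simp
  hence "N \<le> \<bar>d\<bar>" using a by (intro zdvd_imp_le) auto
  thus False using a by auto
qed

lemma modne: "3 \<le> n \<Longrightarrow> -2 \<le> d \<Longrightarrow> d \<le> 2 \<Longrightarrow> d \<noteq> 0 \<Longrightarrow> (x + d) mod int n \<noteq> x mod int n"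
proof
  assume a: "3 \<le> n" "-2 \<le> d" "d \<le> 2" "d \<noteq> 0" "(x + d) mod int n = x mod int n"
  hence "int n dvd (x + d) - x" using modeq[of "int n"] by auto
  hence "int n dvd d" by simp
  thus False using small_dvd[of "int n" d] a by auto
qed

lemma sg_inv[simp]: "3 \<le> n \<Longrightarrow> sg n p (sg n p x) = x"
proof -
  assume n: "3 \<le> n"
  have A: "(x + 1) mod int n \<noteq> x mod int n" for x using modne[OF n, of 1] by auto
  show ?thesis
  proof (cases "x mod int n = int p")
    case True
    have "(x + 1) mod int n \<noteq> int p" using A[of x] True by auto
    thus ?thesis using True by (simp add: sg_def)
  next
    case False
    then show ?thesis by (auto simp add: sg_def)
  qed
qed

lemma sg_per: "sg n p (x + int n) = sg n p x + int n"
proof -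
  have "(x + int n - 1) mod int n = ((x - 1) + int n) mod int n" by (simp add: algebra_simps)
  also have "\<dots> = (x - 1) mod int n" by (rule mod_add_self2)
  finally have "(x + int n - 1) mod int n = (x - 1) mod int n" .
  thus ?thesis by (auto simp add: sg_def)
qed

lemma F_per: "F n w (x + int n) = F n w x + int n"
  by (induction w arbitrary: x) (auto simp: sg_per)

lemma F_perm_nat: "F n w (x + int n * int k) = F n w x + int n * int k"
proof (induction k arbitrary: x)
  case 0 then show ?case by simp
next
  case (Suc k)
  have "F n w (x + int n * int (Suc k)) = F n w ((x + int n * int k) + int n)"
    by (simp add: algebra_simps)
  also have "\<dots> = F n w (x + int n * int k) + int n" by (rule F_per)
  also have "\<dots> = F n w x + int n * int (Suc k)" using Suc by (simp add: algebra_simps)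
  finally show ?case .
qed

lemma F_perm: "F n w (x + int n * k) = F n w x + int n * k"
proof (cases "k \<ge> 0")
  case True
  then obtain m where "k = int m" by (metis nonneg_int_cases)
  then show ?thesis using F_perm_nat by simp
next
  case False
  then obtain m where m: "k = - int m" by (metis linorder_not_le neg_int_cases order.strict_implies_order minus_minus nonneg_int_cases neg_0_le_iff_le)
  have "F n w ((x + int n * k) + int n * int m) = F n w (x + int n * k) + int n * int m"
    using F_perm_nat by blast
  thus ?thesis using m by (simp add: algebra_simps)
qed

lemma F_inv1: "3 \<le> n \<Longrightarrow> F n v (F n (rev v) x) = x"
  by (induction v arbitrary: x) auto
lemma F_inv2: "3 \<le> n \<Longrightarrow> F n (rev v) (F n v x) = x"
  using F_inv1[of n "rev v"] by simp

lemma sg_at: "x mod int n = int p \<Longrightarrow> sg n p x = x + 1" by (simp add: sg_def)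
lemma sg_at1: "3 \<le> n \<Longrightarrow> (x - 1) mod int n = int p \<Longrightarrow> sg n p x = x - 1"
  using modne[of n "-1" x] by (auto simp add: sg_def)
lemma sg_oth: "x mod int n \<noteq> int p \<Longrightarrow> (x - 1) mod int n \<noteq> int p \<Longrightarrow> sg n p x = x"
  by (simp add: sg_def)



definition sd :: "int \<Rightarrow> int" where "sd r = (if r = 0 then 1 else if r = 1 then -1 else 0)"
definition MM :: "int \<Rightarrow> int \<Rightarrow> int" where
  "MM N t = (if t < -N then t + 2*N else if t < 0 then t + N else if t \<ge> 2*N then t - 2*N
             else if t \<ge> N then t - N else t)"

lemma mod_shift: "0 \<le> t + k*N \<Longrightarrow> t + k*N < N \<Longrightarrow> t mod (N::int) = t + k*N"
proof -
  assume a: "0 \<le> t + k*N" "t + k*N < N"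
  have "t mod N = (t + k*N) mod N" by simp
  also have "\<dots> = t + k*N" using a by (intro mod_pos_pos_trivial) auto
  finally show ?thesis .
qed

lemma MM_ok: "0 < N \<Longrightarrow> -2*N \<le> t \<Longrightarrow> t < 3*N \<Longrightarrow> t mod N = MM N t"
  using mod_shift[of t 2 N] mod_shift[of t 1 N] mod_shift[of t 0 N] mod_shift[of t "-1" N]
    mod_shift[of t "-2" N]
  unfolding MM_def by (auto simp: algebra_simps)

lemma sg_alt: "3 \<le> n \<Longrightarrow> p < n \<Longrightarrow> sg n p x = x + sd ((x - int p) mod int n)"
proof -
  assume n: "3 \<le> n" and p: "p < n"
  have pm: "int p mod int n = int p" using p by simp
  have e1: "(x mod int n = int p) \<longleftrightarrow> (x - int p) mod int n = 0"
  proof -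
    have "(x mod int n = int p) \<longleftrightarrow> (x mod int n = int p mod int n)" using pm by simp
    also have "\<dots> \<longleftrightarrow> int n dvd x - int p" using n by (intro modeq) auto
    also have "\<dots> \<longleftrightarrow> (x - int p) mod int n = 0" by (simp add: dvd_eq_mod_eq_0)
    finally show ?thesis .
  qed
  have one: "1 mod int n = 1" using n by simp
  have e2: "((x - 1) mod int n = int p) \<longleftrightarrow> (x - int p) mod int n = 1"
  proof -
    have "((x - 1) mod int n = int p) \<longleftrightarrow> ((x - 1) mod int n = int p mod int n)" using pm by simp
    also have "\<dots> \<longleftrightarrow> int n dvd (x - 1) - int p" using n by (intro modeq) auto
    also have "\<dots> \<longleftrightarrow> int n dvd (x - int p) - 1" by (simp add: algebra_simps)
    also have "\<dots> \<longleftrightarrow> (x - int p) mod int n = 1 mod int n" using n by (intro modeq[symmetric]) auto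
    finally show ?thesis using one by simp
  qed
  show ?thesis unfolding sg_def sd_def using e1 e2 by auto
qed

lemma sg_shift:
  assumes "3 \<le> n" "p < n" "q < n"
    and "- 2 * int n \<le> (x - int q) mod int n + c + int q - int p"
    and "(x - int q) mod int n + c + int q - int p < 3 * int n"
  shows "sg n p (x + c) = x + (c + sd (MM (int n) ((x - int q) mod int n + c + int q - int p)))"
proof -
  have "(x + c - int p) mod int n = ((x - int q) + (c + int q - int p)) mod int n"
    by (simp add: algebra_simps)
  also have "\<dots> = ((x - int q) mod int n + (c + int q - int p)) mod int n"
    by (simp add: mod_add_left_eq)
  also have "\<dots> = MM (int n) ((x - int q) mod int n + c + int q - int p)"
    using assms by (subst MM_ok) (auto simp: algebra_simps)
  finally show ?thesis using sg_alt[OF assms(1,2), of "x + c"] by simp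
qed

lemma sg_val:
  assumes n: "3 \<le> n" and p: "int p = y mod int n" and k: "-1 \<le> k" "k \<le> 2"
  shows "sg n p (y + k) = y + (if k = 0 then 1 else if k = 1 then 0 else k)"
proof -
  have c1: "((y + k) mod int n = int p) \<longleftrightarrow> k = 0"
    using modne[OF n, of k y] p k by auto
  have c2: "((y + k - 1) mod int n = int p) \<longleftrightarrow> k = 1"
    using modne[OF n, of "k - 1" y] p k by (auto simp: algebra_simps)
  show ?thesis unfolding sg_def using c1 c2 by auto
qed

lemma sg_fix: "3 \<le> n \<Longrightarrow> p < n \<Longrightarrow> (x - int p) mod int n \<noteq> 0 \<Longrightarrow> (x - int p) mod int n \<noteq> 1
   \<Longrightarrow> sg n p x = x"
  using sg_alt[of n p x] by (simp add: sd_def)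

lemma braid1:
  assumes n: "3 \<le> n" and ij: "i < n" "j < n" "(int i + 1) mod int n = int j"
  shows "sg n i (sg n j (sg n i x)) = sg n j (sg n i (sg n j x))"
proof -
  define r where "r = (x - int i) mod int n"
  have r: "0 \<le> r" "r < int n" using n by (auto simp: r_def)
  define y where "y = x - r"
  have "(x - int i) = int n * ((x - int i) div int n) + r" unfolding r_def by simp
  hence "y = int i + int n * ((x - int i) div int n)" unfolding y_def by (simp add: algebra_simps)
  hence ym: "y mod int n = int i" using ij by simp
  have "(y + 1) mod int n = (y mod int n + 1) mod int n" by (simp add: mod_add_left_eq)
  hence ym1: "(y + 1) mod int n = int j" using ij(3) ym by simp
  have Si: "sg n i (y + k) = y + (if k = 0 then 1 else if k = 1 then 0 else k)" if "-1 \<le> k" "k \<le> 2" for k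
    using sg_val[OF n ym[symmetric] that] .
  have Sj: "sg n j (y + k) = y + (if k = 1 then 2 else if k = 2 then 1 else k)" if "0 \<le> k" "k \<le> 3" for k
  proof -
    have "sg n j ((y + 1) + (k - 1)) = (y + 1) + (if k - 1 = 0 then 1 else if k - 1 = 1 then 0 else k - 1)"
      using sg_val[OF n ym1[symmetric], of "k - 1"] that by simp
    thus ?thesis by (simp add: algebra_simps split: if_splits)
  qed
  show ?thesis
  proof (cases "r \<le> 2")
    case True
    hence "r = 0 \<or> r = 1 \<or> r = 2" using r by auto
    moreover have "x = y + r" by (simp add: y_def)
    ultimately show ?thesis
      using Si[of 0] Si[of 1] Si[of 2] Sj[of 0] Sj[of 1] Sj[of 2] by auto
  next
    case False
    have fi: "sg n i x = x" using False by (intro sg_fix[OF n ij(1)]) (auto simp: r_def[symmetric])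
    have "int n dvd (int i + 1) - int j" using ij(3) modeq[of "int n" "int i + 1" "int j"] n ij by simp
    then obtain k where k: "int i + 1 - int j = int n * k" by (auto simp: dvd_def)
    have "(x - int j) mod int n = ((x - int i - 1) + int n * k) mod int n" using k by (simp add: algebra_simps)
    also have "\<dots> = (x - int i - 1) mod int n" by simp
    also have "\<dots> = (r - 1) mod int n" by (simp add: r_def mod_diff_left_eq)
    also have "\<dots> = r - 1" using False r by (intro mod_pos_pos_trivial) auto
    finally have "(x - int j) mod int n = r - 1" .
    hence fj: "sg n j x = x" using False by (intro sg_fix[OF n ij(2)]) auto
    show ?thesis using fi fj by simp
  qed
qed



lemma intmod1: "int ((a + 1) mod n) = (int a + 1) mod int n"
  by (simp add: of_nat_mod add.commute)
lemma intmod1': "((a + 1) mod n = b mod n) \<longleftrightarrow> ((int a + 1) mod int n = int b mod int n)"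
proof -
  have "((a + 1) mod n = b mod n) \<longleftrightarrow> int ((a + 1) mod n) = int (b mod n)" by simp
  also have "\<dots> \<longleftrightarrow> ((int a + 1) mod int n = int b mod int n)" by (simp add: of_nat_mod add.commute)
  finally show ?thesis .
qed

lemma braid_sg:
  assumes n: "3 \<le> n" and ij: "i < n" "j < n" "adj n i j"
  shows "sg n i (sg n j (sg n i x)) = sg n j (sg n i (sg n j x))"
proof -
  have "(i + 1) mod n = j \<or> (j + 1) mod n = i" using ij unfolding adj_def by simp
  hence "(int i + 1) mod int n = int j \<or> (int j + 1) mod int n = int i"
    using intmod1'[of i n j] intmod1'[of j n i] ij by simp
  thus ?thesis
  proof
    assume "(int i + 1) mod int n = int j" thus ?thesis using braid1[OF n ij(1,2)] by blast
  next
    assume "(int j + 1) mod int n = int i" thus ?thesis using braid1[OF n ij(2,1), of x] by simp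
  qed
qed

definition mv :: "nat \<Rightarrow> nat \<Rightarrow> int \<Rightarrow> bool" where
  "mv n p x \<longleftrightarrow> (x - int p) mod int n = 0 \<or> (x - int p) mod int n = 1"

lemma mv_fix: "3 \<le> n \<Longrightarrow> p < n \<Longrightarrow> \<not> mv n p x \<Longrightarrow> sg n p x = x"
  unfolding mv_def by (intro sg_fix) auto

lemma mv_sg: assumes n: "3 \<le> n" and p: "p < n" and m: "mv n p x" shows "mv n p (sg n p x)"
proof -
  have e: "(x + c - int p) mod int n = ((x - int p) mod int n + c) mod int n" for c
    using mod_add_left_eq[of "x - int p" "int n" c] by (simp add: algebra_simps)
  have one: "(1::int) mod int n = 1" using n by simp
  show ?thesis
  proof (cases "(x - int p) mod int n = 0")
    case True
    then show ?thesis using sg_alt[OF n p, of x] e[of 1] one by (simp add: sd_def mv_def)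
  next
    case False
    hence "(x - int p) mod int n = 1" using m by (simp add: mv_def)
    then show ?thesis using sg_alt[OF n p, of x] e[of "-1"] by (simp add: sd_def mv_def)
  qed
qed

lemma mv_disj:
  assumes n: "3 \<le> n" and ij: "i < n" "j < n" "i \<noteq> j" "\<not> adj n i j"
  and mi: "mv n i x" and mj: "mv n j x"
  shows False
proof -
  obtain a where a: "(x - int i) mod int n = a" "a = 0 \<or> a = 1" using mi by (auto simp: mv_def)
  obtain b where b: "(x - int j) mod int n = b" "b = 0 \<or> b = 1" using mj by (auto simp: mv_def)
  have "int n dvd (x - int i) - (x - int i) mod int n" by (rule dvd_minus_mod)
  then obtain k1 where k1: "(x - int i) - a = int n * k1" using a(1) by (auto simp: dvd_def)
  have "int n dvd (x - int j) - (x - int j) mod int n" by (rule dvd_minus_mod)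
  then obtain k2 where k2: "(x - int j) - b = int n * k2" using b(1) by (auto simp: dvd_def)
  have np: "0 < int n" using n by simp
  have key: "int j + 1 * (b - a) - int i = int n * (k1 - k2)" using k1 k2 by (simp add: algebra_simps)
  consider "b - a = 0" | "b - a = 1" | "b - a = -1" using a b by auto
  thus False
  proof cases
    case 1
    hence "int j - int i = int n * (k1 - k2)" using key by simp
    hence "int n dvd int j - int i" by (rule dvdI)
    hence "int j mod int n = int i mod int n" using modeq[OF np] by blast
    thus False using ij by simp
  next
    case 2
    hence "(int j + 1) - int i = int n * (k1 - k2)" using key by simp
    hence "int n dvd (int j + 1) - int i" by (rule dvdI)
    hence "(int j + 1) mod int n = int i mod int n" using modeq[OF np] by blast
    hence "(j + 1) mod n = i mod n" using intmod1'[of j n i] by simp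
    thus False using ij unfolding adj_def by simp
  next
    case 3
    hence "(int i + 1) - int j = int n * (k2 - k1)" using key by (simp add: algebra_simps)
    hence "int n dvd (int i + 1) - int j" by (rule dvdI)
    hence "(int i + 1) mod int n = int j mod int n" using modeq[OF np] by blast
    hence "(i + 1) mod n = j mod n" using intmod1'[of i n j] by simp
    thus False using ij unfolding adj_def by simp
  qed
qed

lemma comm_sg:
  assumes n: "3 \<le> n" and ij: "i < n" "j < n" "i \<noteq> j" "\<not> adj n i j"
  shows "sg n i (sg n j x) = sg n j (sg n i x)"
proof (cases "mv n i x")
  case True
  hence "\<not> mv n j x" "\<not> mv n j (sg n i x)" using mv_disj[OF n ij] mv_sg[OF n ij(1) True] by blast+
  thus ?thesis using mv_fix[OF n ij(2)] by simp
next
  case False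
  show ?thesis
  proof (cases "mv n j x")
    case True
    have adj': "\<not> adj n j i" using ij unfolding adj_def by auto
    hence "\<not> mv n i (sg n j x)" using mv_disj[OF n ij(2,1) _ adj'] mv_sg[OF n ij(2) True] ij(3) by blast
    thus ?thesis using mv_fix[OF n ij(1)] False by simp
  next
    case False2: False
    thus ?thesis using mv_fix[OF n ij(1)] mv_fix[OF n ij(2)] False by simp
  qed
qed

lemma sound: "word_equiv n a b \<Longrightarrow> 3 \<le> n \<Longrightarrow> F n a = F n b"
proof (induction rule: word_equiv.induct)
  case (square i) then show ?case by (auto simp: fun_eq_iff)
next
  case (braid i j) then show ?case using braid_sg[of n i j] by (auto simp: fun_eq_iff)
next
  case (comm i j) then show ?case using comm_sg[of n i j] by (auto simp: fun_eq_iff)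
qed auto



definition ired :: "nat \<Rightarrow> nat list \<Rightarrow> bool" where
  "ired n w \<longleftrightarrow> (\<forall>t<length w. F n (take t w) (int (w!t)) < F n (take t w) (int (w!t) + 1))"

lemma ired_Nil[simp]: "ired n []" by (simp add: ired_def)

lemma ired_snoc: "ired n (x @ [s]) \<longleftrightarrow> ired n x \<and> F n x (int s) < F n x (int s + 1)"
  unfolding ired_def by (auto simp: nth_append less_Suc_eq)

lemma ired_prefix: "ired n (a @ b) \<Longrightarrow> ired n a"
proof (induction b rule: rev_induct)
  case Nil then show ?case by simp
next
  case (snoc x xs) then show ?case using ired_snoc[of n "a @ xs" x] by simp
qed

lemma F_snoc: "F n (x @ [s]) z = F n x (sg n s z)" by simp

lemma F_shift: "F n x (B + c) = F n x (B mod int n + c) + int n * (B div int n)"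
proof -
  have "B + c = (B mod int n + c) + int n * (B div int n)" by (simp add: algebra_simps)
  thus ?thesis using F_perm[of n x "B mod int n + c" "B div int n"] by simp
qed

lemma lt_lift: "B mod int n = int s \<Longrightarrow> (F n x (int s + c) < F n x (int s + d)) \<longleftrightarrow> (F n x (B + c) < F n x (B + d))"
  using F_shift[of n x B c] F_shift[of n x B d] by simp

lemma sgv: assumes n: "3 \<le> n" and p: "int p = y mod int n"
  shows "sg n p y = y + 1" "sg n p (y + 1) = y" "sg n p (y + 2) = y + 2" "sg n p (y - 1) = y - 1"
  using sg_val[OF n p, of 0] sg_val[OF n p, of 1] sg_val[OF n p, of 2] sg_val[OF n p, of "-1"] by simp_all

lemma adj_cases: "s < n \<Longrightarrow> t < n \<Longrightarrow> adj n s t \<Longrightarrow>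
   (int s + 1) mod int n = int t \<or> (int t + 1) mod int n = int s"
  using intmod1'[of s n t] intmod1'[of t n s] unfolding adj_def by simp

lemma F_eq_snoc: "3 \<le> n \<Longrightarrow> F n (y @ [s]) = F n x \<Longrightarrow> F n y z = F n x (sg n s z)"
proof -
  assume n: "3 \<le> n" and e: "F n (y @ [s]) = F n x"
  have "F n y z = F n y (sg n s (sg n s z))" using n by simp
  also have "\<dots> = F n (y @ [s]) (sg n s z)" by simp
  also have "\<dots> = F n x (sg n s z)" using e by simp
  finally show ?thesis .
qed

lemma weq_snoc: "word_equiv n a b \<Longrightarrow> word_equiv n (a @ c) (b @ c)"
  using word_equiv.cong[of n a b "[]" c] by simp
lemma weq_pre: "word_equiv n a b \<Longrightarrow> word_equiv n (c @ a) (c @ b)"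
  using word_equiv.cong[of n a b c "[]"] by simp



lemma exch:
  assumes n: "3 \<le> n"
  shows "ired n x \<Longrightarrow> set x \<subseteq> {..<n} \<Longrightarrow> s < n \<Longrightarrow> F n x (int s + 1) < F n x (int s) \<Longrightarrow>
    \<exists>y. set y \<subseteq> {..<n} \<and> ired n y \<and> length y + 1 = length x \<and> word_equiv n x (y @ [s])"
proof (induction "length x" arbitrary: x s rule: less_induct)
  case less
  show ?case
  proof (cases x rule: rev_exhaust)
    case Nil
    then show ?thesis using less.prems by simp
  next
    case (snoc x' t)
    have ix': "ired n x'" and asc: "F n x' (int t) < F n x' (int t + 1)"
      using less.prems(1) snoc ired_snoc by auto
    have t: "t < n" and sx': "set x' \<subseteq> {..<n}" using less.prems(2) snoc by auto
    have s: "s < n" by (rule less.prems(3))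
    have Fx: "F n x z = F n x' (sg n t z)" for z using snoc by simp
    have desc: "F n x (int s + 1) < F n x (int s)" by (rule less.prems(4))
    have lx: "length x' < length x" using snoc by simp
    show ?thesis
    proof (cases "t = s")
      case True
      then show ?thesis using ix' sx' snoc by (auto intro: word_equiv.refl)
    next
      case ts: False
      show ?thesis
      proof (cases "adj n s t")
        case False
        have nadj': "\<not> adj n t s" using False unfolding adj_def by auto
        have ms: "mv n s (int s)" "mv n s (int s + 1)" using n s by (auto simp: mv_def)
        have mt: "mv n t (int t)" "mv n t (int t + 1)" using n t by (auto simp: mv_def)
        have fx1: "sg n t (int s) = int s" "sg n t (int s + 1) = int s + 1"
          using mv_fix[OF n t] mv_disj[OF n s t _ False] ms ts by auto
        have fx2: "sg n s (int t) = int t" "sg n s (int t + 1) = int t + 1"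
          using mv_fix[OF n s] mv_disj[OF n t s _ nadj'] mt ts by auto
        have d': "F n x' (int s + 1) < F n x' (int s)" using desc Fx fx1 by simp
        obtain y' where y': "set y' \<subseteq> {..<n}" "ired n y'" "length y' + 1 = length x'"
          "word_equiv n x' (y' @ [s])" using less.hyps[OF lx ix' sx' s d'] by blast
        have Fy': "F n y' z = F n x' (sg n s z)" for z
          by (rule F_eq_snoc[OF n sound[OF y'(4) n, symmetric]])
        have "ired n (y' @ [t])" using y'(2) asc Fy' fx2 ired_snoc by simp
        moreover have "word_equiv n x ((y' @ [t]) @ [s])"
        proof -
          have "word_equiv n x (y' @ [s] @ [t])" using snoc weq_snoc[OF y'(4), of "[t]"] by simp
          moreover have "word_equiv n (y' @ [s, t]) (y' @ [t, s])"
            using weq_pre[OF word_equiv.comm[OF s t _ False]] ts by auto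
          ultimately show ?thesis using word_equiv.trans by fastforce
        qed
        ultimately show ?thesis using y' t snoc
          by (intro exI[of _ "y' @ [t]"]) auto
      next
        case adj: True
        from adj_cases[OF s t adj] show ?thesis
        proof
          assume st: "(int s + 1) mod int n = int t"
          have m0: "int s = int s mod int n" using s by simp
          have m1: "int t = (int s + 1) mod int n" using st by simp
          have vs: "sg n s (int s) = int s + 1" "sg n s (int s + 1) = int s" "sg n s (int s + 2) = int s + 2"
            using sgv[OF n m0] by auto
          have vt: "sg n t (int s) = int s" "sg n t (int s + 1) = int s + 2" "sg n t (int s + 2) = int s + 1"
            using sgv[OF n m1] by (auto simp: algebra_simps)
          define A where "A = F n x' (int s)"
          define B where "B = F n x' (int s + 1)"
          define C where "C = F n x' (int s + 2)"
          have BC: "B < C" using asc lt_lift[of "int s + 1" n t x' 0 1] st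
            by (simp add: B_def C_def algebra_simps)
          have CA: "C < A" using desc Fx vt by (simp add: A_def C_def)
          have d': "F n x' (int s + 1) < F n x' (int s)" using BC CA by (simp add: A_def B_def)
          obtain x'' where x'': "set x'' \<subseteq> {..<n}" "ired n x''" "length x'' + 1 = length x'"
            "word_equiv n x' (x'' @ [s])" using less.hyps[OF lx ix' sx' s d'] by blast
          have Fx'': "F n x'' z = F n x' (sg n s z)" for z
            by (rule F_eq_snoc[OF n sound[OF x''(4) n, symmetric]])
          have lx'': "length x'' < length x" using x''(3) lx by simp
          have d'': "F n x'' (int t + 1) < F n x'' (int t)"
          proof -
            have "F n x'' (int s + 2) < F n x'' (int s + 1)" using Fx'' vs CA
              by (simp add: A_def C_def)
            thus ?thesis using lt_lift[of "int s + 1" n t x'' 1 0] st by (simp add: algebra_simps)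
          qed
          obtain x3 where x3: "set x3 \<subseteq> {..<n}" "ired n x3" "length x3 + 1 = length x''"
            "word_equiv n x'' (x3 @ [t])" using less.hyps[OF lx'' x''(2,1) t d''] by blast
          have Fx3: "F n x3 z = F n x'' (sg n t z)" for z
            by (rule F_eq_snoc[OF n sound[OF x3(4) n, symmetric]])
          have h1: "F n x3 (int s) < F n x3 (int s + 1)"
            using Fx3 Fx'' vs vt BC by (simp add: B_def C_def)
          have h2: "F n (x3 @ [s]) (int s + 1) < F n (x3 @ [s]) (int s + 2)"
            using Fx3 Fx'' vs vt BC CA by (simp add: A_def B_def C_def)
          have h2': "F n (x3 @ [s]) (int t) < F n (x3 @ [s]) (int t + 1)"
            using h2 lt_lift[of "int s + 1" n t "x3 @ [s]" 0 1] st by (simp add: algebra_simps)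
          have "ired n (x3 @ [s] @ [t])"
            using ired_snoc[of n "x3 @ [s]" t] ired_snoc[of n x3 s] x3(2) h1 h2' by simp
          moreover have "word_equiv n x ((x3 @ [s, t]) @ [s])"
          proof -
            have "word_equiv n x (x'' @ [s] @ [t])" using snoc weq_snoc[OF x''(4), of "[t]"] by simp
            moreover have "word_equiv n (x'' @ [s, t]) (x3 @ [t, s, t])"
              using weq_snoc[OF x3(4), of "[s, t]"] by simp
            moreover have "word_equiv n (x3 @ [t, s, t]) (x3 @ [s, t, s])"
              using weq_pre[OF word_equiv.braid[OF t s]] adj unfolding adj_def by auto
            ultimately show ?thesis using word_equiv.trans by fastforce
          qed
          ultimately show ?thesis using x3 s t x''(3) snoc
            by (intro exI[of _ "x3 @ [s, t]"]) auto
        next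
          assume ts': "(int t + 1) mod int n = int s"
          have m0: "int t = int t mod int n" using t by simp
          have m1: "int s = (int t + 1) mod int n" using ts' by simp
          have vt: "sg n t (int t) = int t + 1" "sg n t (int t + 1) = int t" "sg n t (int t + 2) = int t + 2"
            using sgv[OF n m0] by auto
          have vs: "sg n s (int t) = int t" "sg n s (int t + 1) = int t + 2" "sg n s (int t + 2) = int t + 1"
            using sgv[OF n m1] by (auto simp: algebra_simps)
          define P where "P = F n x' (int t)"
          define Q where "Q = F n x' (int t + 1)"
          define R where "R = F n x' (int t + 2)"
          have PQ: "P < Q" using asc by (simp add: P_def Q_def)
          have RP: "R < P"
          proof -
            have "F n x (int t + 2) < F n x (int t + 1)"
              using desc lt_lift[of "int t + 1" n s x 1 0] ts' by (simp add: algebra_simps)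
            thus ?thesis using Fx vt by (simp add: P_def R_def)
          qed
          have d': "F n x' (int s + 1) < F n x' (int s)"
            using lt_lift[of "int t + 1" n s x' 1 0] ts' RP PQ by (simp add: Q_def R_def algebra_simps)
          obtain x'' where x'': "set x'' \<subseteq> {..<n}" "ired n x''" "length x'' + 1 = length x'"
            "word_equiv n x' (x'' @ [s])" using less.hyps[OF lx ix' sx' s d'] by blast
          have Fx'': "F n x'' z = F n x' (sg n s z)" for z
            by (rule F_eq_snoc[OF n sound[OF x''(4) n, symmetric]])
          have lx'': "length x'' < length x" using x''(3) lx by simp
          have d'': "F n x'' (int t + 1) < F n x'' (int t)"
            using Fx'' vs RP by (simp add: P_def R_def)
          obtain x3 where x3: "set x3 \<subseteq> {..<n}" "ired n x3" "length x3 + 1 = length x''"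
            "word_equiv n x'' (x3 @ [t])" using less.hyps[OF lx'' x''(2,1) t d''] by blast
          have Fx3: "F n x3 z = F n x'' (sg n t z)" for z
            by (rule F_eq_snoc[OF n sound[OF x3(4) n, symmetric]])
          have h1': "F n x3 (int t + 1) < F n x3 (int t + 2)"
            using Fx3 Fx'' vs vt PQ by (simp add: P_def Q_def)
          have h1: "F n x3 (int s) < F n x3 (int s + 1)"
            using h1' lt_lift[of "int t + 1" n s x3 0 1] ts' by (simp add: algebra_simps)
          have h2: "F n (x3 @ [s]) (int t) < F n (x3 @ [s]) (int t + 1)"
            using Fx3 Fx'' vs vt PQ RP by (simp add: P_def Q_def R_def)
          have "ired n (x3 @ [s] @ [t])"
            using ired_snoc[of n "x3 @ [s]" t] ired_snoc[of n x3 s] x3(2) h1 h2 by simp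
          moreover have "word_equiv n x ((x3 @ [s, t]) @ [s])"
          proof -
            have "word_equiv n x (x'' @ [s] @ [t])" using snoc weq_snoc[OF x''(4), of "[t]"] by simp
            moreover have "word_equiv n (x'' @ [s, t]) (x3 @ [t, s, t])"
              using weq_snoc[OF x3(4), of "[s, t]"] by simp
            moreover have "word_equiv n (x3 @ [t, s, t]) (x3 @ [s, t, s])"
              using weq_pre[OF word_equiv.braid[OF t s]] adj unfolding adj_def by auto
            ultimately show ?thesis using word_equiv.trans by fastforce
          qed
          ultimately show ?thesis using x3 s t x''(3) snoc
            by (intro exI[of _ "x3 @ [s, t]"]) auto
        qed
      qed
    qed
  qed
qed



lemma sg_bounds: "x - 1 \<le> sg n p x" "sg n p x \<le> x + 1" by (auto simp: sg_def)

lemma sg_mono: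
  assumes n: "3 \<le> n" and xy: "x < y" and nc: "\<not> (y = x + 1 \<and> x mod int n = int p)"
  shows "sg n p x < sg n p y"
proof -
  consider "y = x + 1" | "y = x + 2" | "y \<ge> x + 3" using xy by linarith
  thus ?thesis
  proof cases
    case 1
    have "sg n p x \<le> x" using nc 1 by (auto simp: sg_def)
    moreover have "sg n p y \<ge> y" using nc 1 by (auto simp: sg_def)
    ultimately show ?thesis using xy by simp
  next
    case 2
    have "\<not> (x mod int n = int p \<and> (y - 1) mod int n = int p)"
      using modne[OF n, of 1 x] 2 by (auto simp: add.commute)
    hence "sg n p x \<le> x \<or> sg n p y \<ge> y" by (auto simp: sg_def)
    thus ?thesis using sg_bounds[where x=x and n=n and p=p] sg_bounds[where x=y and n=n and p=p] 2 by linarith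
  next
    case 3
    thus ?thesis using sg_bounds[where x=x and n=n and p=p] sg_bounds[where x=y and n=n and p=p] by linarith
  qed
qed

lemma mono_cross:
  assumes n: "3 \<le> n"
  shows "ired n (z @ x) \<Longrightarrow> set (z @ x) \<subseteq> {..<n} \<Longrightarrow> a < b \<Longrightarrow> F n (rev z) b < F n (rev z) a \<Longrightarrow>
    F n (rev (z @ x)) b < F n (rev (z @ x)) a"
proof (induction x rule: rev_induct)
  case Nil then show ?case by simp
next
  case (snoc s xs)
  have ir: "ired n (z @ xs)" and asc: "F n (z @ xs) (int s) < F n (z @ xs) (int s + 1)"
    using snoc.prems(1) ired_snoc[of n "z @ xs" s] by auto
  have s: "s < n" using snoc.prems(2) by auto
  define G where "G = F n (rev (z @ xs))"
  have IH: "G b < G a" using snoc.IH ir snoc.prems(2-4) by (auto simp: G_def)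
  have Gs: "F n (rev (z @ xs @ [s])) c = sg n s (G c)" for c by (simp add: G_def)
  have nc: "\<not> (G a = G b + 1 \<and> G b mod int n = int s)"
  proof
    assume h: "G a = G b + 1 \<and> G b mod int n = int s"
    have "F n (z @ xs) (G b) < F n (z @ xs) (G b + 1)"
      using asc lt_lift[of "G b" n s "z @ xs" 0 1] h by simp
    hence "F n (z @ xs) (G b) < F n (z @ xs) (G a)" using h by simp
    moreover have "F n (z @ xs) (G b) = b" "F n (z @ xs) (G a) = a"
      using F_inv1[OF n] by (auto simp: G_def)
    ultimately show False using snoc.prems(3) by simp
  qed
  show ?case using sg_mono[OF n IH nc] Gs by simp
qed

definition rep :: "nat \<Rightarrow> int \<Rightarrow> nat" where "rep n y = nat ((y - 1) mod int n) + 1"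

lemma tr_rep:
  assumes n: "3 \<le> n" and p: "p < n"
  shows "tr n p (rep n y) = rep n (sg n p y)"
proof -
  define N where "N = int n"
  have N: "3 \<le> N" using n by (simp add: N_def)
  define r where "r = (y - 1) mod N"
  have r: "0 \<le> r" "r < N" using N by (auto simp: r_def)
  have e1: "y mod N = (if r = N - 1 then 0 else r + 1)"
  proof -
    have "y mod N = ((y - 1) mod N + 1) mod N" by (simp add: mod_add_left_eq)
    also have "\<dots> = (r + 1) mod N" by (simp add: r_def)
    also have "\<dots> = (if r = N - 1 then 0 else r + 1)" using r by auto
    finally show ?thesis .
  qed
  have e2: "(y - 1 - 1) mod N = (if r = 0 then N - 1 else r - 1)"
  proof -
    have "(y - 1 - 1) mod N = ((y - 1) mod N - 1) mod N" by (simp add: mod_diff_left_eq)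
    also have "\<dots> = (r - 1) mod N" by (simp add: r_def)
    also have "\<dots> = (if r = 0 then N - 1 else r - 1)"
    proof (cases "r = 0")
      case True
      have "(r - 1) mod N = (r - 1 + N) mod N" by simp
      also have "\<dots> = r - 1 + N" using True r N by (intro mod_pos_pos_trivial) auto
      finally show ?thesis using True by simp
    qed (use r in auto)
    finally show ?thesis .
  qed
  have ry: "rep n y = nat r + 1" by (simp add: rep_def r_def N_def)
  have ry1: "rep n (y + 1) = nat (y mod N) + 1" by (simp add: rep_def N_def)
  have rym: "rep n (y - 1) = nat ((y - 1 - 1) mod N) + 1" by (simp add: rep_def N_def)
  have sgd: "sg n p y = (if y mod N = int p then y + 1 else if r = int p then y - 1 else y)"
    by (simp add: sg_def r_def N_def)
  have pN: "int p < N" using p by (simp add: N_def)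
  have Nn: "N = int n" by (simp add: N_def)
  consider "y mod N = int p" | "y mod N \<noteq> int p" "r = int p" | "y mod N \<noteq> int p" "r \<noteq> int p" by blast
  thus ?thesis
  proof cases
    case 1
    have "tr n p (rep n y) = p + 1"
      using 1 e1 ry r pN Nn unfolding tr_def lowpos_def highpos_def by (auto split: if_splits)
    moreover have "rep n (sg n p y) = p + 1" using 1 sgd ry1 by simp
    ultimately show ?thesis by simp
  next
    case 2
    have "tr n p (rep n y) = (if p = 0 then n else p)"
      using 2 ry r pN Nn unfolding tr_def lowpos_def highpos_def by (auto split: if_splits)
    moreover have "rep n (sg n p y) = (if p = 0 then n else p)" using 2 sgd rym e2 r Nn by auto
    ultimately show ?thesis by simp
  next
    case 3
    have "tr n p (rep n y) = rep n y"
      using 3 e1 ry r pN Nn unfolding tr_def lowpos_def highpos_def by (auto split: if_splits)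
    thus ?thesis using 3 sgd by simp
  qed
qed



lemma reduced_ired:
  assumes n: "3 \<le> n" and r: "reduced n w"
  shows "ired n w"
proof (rule ccontr)
  assume "\<not> ired n w"
  define P where "P t \<longleftrightarrow> t < length w \<and> \<not> (F n (take t w) (int (w!t)) < F n (take t w) (int (w!t) + 1))" for t
  have "\<exists>t. P t" using \<open>\<not> ired n w\<close> unfolding ired_def P_def by auto
  then obtain t where Pt: "P t" and mn: "\<forall>t'<t. \<not> P t'" using exists_least_iff[of P] by blast
  have sw: "set w \<subseteq> {..<n}" using r by (simp add: reduced_def)
  have tl: "t < length w" using Pt by (simp add: P_def)
  define x where "x = take t w"
  define p where "p = w ! t"
  have ix: "ired n x" unfolding ired_def x_def
  proof (intro allI impI)
    fix t' assume "t' < length (take t w)"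
    hence "t' < t" "t' < length w" by auto
    hence "\<not> P t'" using mn by simp
    thus "F n (take t' (take t w)) (int (take t w ! t')) < F n (take t' (take t w)) (int (take t w ! t') + 1)"
      using \<open>t' < t\<close> \<open>t' < length w\<close> by (simp add: P_def min_def)
  qed
  have sx: "set x \<subseteq> {..<n}" using sw set_take_subset[of t w] by (auto simp: x_def)
  have "w ! t \<in> set w" using tl by simp
  hence p: "p < n" using sw by (auto simp: p_def)
  have ne: "F n x (int p) \<noteq> F n x (int p + 1)"
  proof
    assume "F n x (int p) = F n x (int p + 1)"
    hence "F n (rev x) (F n x (int p)) = F n (rev x) (F n x (int p + 1))" by simp
    thus False using F_inv2[OF n] by simp
  qed
  have d: "F n x (int p + 1) < F n x (int p)" using Pt ne by (auto simp: P_def x_def p_def)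
  obtain y where y: "set y \<subseteq> {..<n}" "ired n y" "length y + 1 = length x" "word_equiv n x (y @ [p])"
    using exch[OF n ix sx p d] by blast
  define rest where "rest = drop (Suc t) w"
  have w: "w = x @ [p] @ rest" unfolding x_def p_def rest_def using tl by (simp add: id_take_nth_drop[symmetric])
  have e1: "word_equiv n w (y @ [p] @ [p] @ rest)"
    using word_equiv.cong[OF y(4), of "[]" "[p] @ rest"] w by simp
  have e2: "word_equiv n (y @ [p, p] @ rest) (y @ [] @ rest)"
    using word_equiv.cong[OF word_equiv.square[OF p], of y rest] by simp
  have e: "word_equiv n w (y @ rest)" using word_equiv.trans[OF e1] e2 by simp
  have "set (y @ rest) \<subseteq> {..<n}" using y(1) sw set_drop_subset[of "Suc t" w] by (auto simp: rest_def)
  hence "length w \<le> length (y @ rest)" using r e unfolding reduced_def by blast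
  moreover have "length (y @ rest) < length w" using w y(3) by simp
  ultimately show False by simp
qed

lemma phi_rep: "3 \<le> n \<Longrightarrow> set w \<subseteq> {..<n} \<Longrightarrow> phi_word n w (rep n y) = rep n (F n w y)"
proof (induction w arbitrary: y)
  case Nil then show ?case by (simp add: phi_word_def)
next
  case (Cons p w)
  have "phi_word n (p # w) (rep n y) = tr n p (phi_word n w (rep n y))" by (simp add: phi_word_def)
  also have "\<dots> = tr n p (rep n (F n w y))" using Cons by simp
  also have "\<dots> = rep n (sg n p (F n w y))" using Cons.prems by (intro tr_rep) auto
  finally show ?case by simp
qed

lemma rep_int: "0 < n \<Longrightarrow> int (rep n y) = y - int n * ((y - 1) div int n)"
proof -
  assume "0 < n"
  have "y - 1 = int n * ((y - 1) div int n) + (y - 1) mod int n" by simp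
  moreover have "int (rep n y) = (y - 1) mod int n + 1"
    using \<open>0 < n\<close> by (simp add: rep_def)
  ultimately show ?thesis by linarith
qed

lemma lowpos_rep: "3 \<le> n \<Longrightarrow> p < n \<Longrightarrow> lowpos n p = rep n (int p)"
  unfolding lowpos_def rep_def
proof (cases "p = 0")
  case True
  assume n: "3 \<le> n"
  have "(-1::int) mod int n = int n - 1"
  proof -
    have "(-1::int) mod int n = (-1 + int n) mod int n" by simp
    also have "\<dots> = -1 + int n" using n by (intro mod_pos_pos_trivial) auto
    finally show ?thesis by simp
  qed
  thus "(if p = 0 then n else p) = nat ((int p - 1) mod int n) + 1" using True n by simp
next
  case False
  assume "3 \<le> n" "p < n"
  thus "(if p = 0 then n else p) = nat ((int p - 1) mod int n) + 1" using False
    by (simp add: mod_pos_pos_trivial)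
qed

lemma highpos_rep: "3 \<le> n \<Longrightarrow> p < n \<Longrightarrow> highpos n p = rep n (int p + 1)"
  unfolding highpos_def rep_def by simp



theorem lemma4p3:
  fixes n :: nat and u v :: "nat list"
  assumes "3 \<le> n"
    and "reduced n u" and "is_glide n u"
    and "reduced n v" and "is_glide n v"
    and "reduced n (v @ u)"
  shows "\<exists>\<alpha> :: nat \<Rightarrow> real. \<forall>i j. wire_below n v u i j \<longrightarrow> \<alpha> i < \<alpha> j"
proof -
  have n: "3 \<le> n" by (rule assms(1))
  define w where "w = v @ u"
  have sw: "set w \<subseteq> {..<n}" using assms(6) by (simp add: reduced_def w_def)
  have sv: "set v \<subseteq> {..<n}" and su: "set u \<subseteq> {..<n}" using sw by (auto simp: w_def)
  have iw: "ired n w" using reduced_ired[OF n assms(6)] by (simp add: w_def)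
  define g where "g c = F n v c - F n (rev u) c" for c
  have gper: "g (c + int n * k) = g c" for c k by (simp add: g_def F_perm)
  have grep: "g (int (rep n c)) = g c" for c
    using rep_int[of n c] n gper[of c "- ((c - 1) div int n)"] by simp
  have gX: "g (F n (rev v) a) = a - F n (rev w) a" for a
    using F_inv1[OF n, of v a] by (simp add: g_def w_def)
  show ?thesis
  proof (intro exI[of _ "\<lambda>i. real_of_int (g (int i))"] allI impI)
    fix i j assume "wire_below n v u i j"
    then obtain t where t: "t < length w"
      and hi: "wstate n v u t (lowpos n (w ! t)) = i" and hj: "wstate n v u t (highpos n (w ! t)) = j"
      unfolding wire_below_def w_def by blast
    define p where "p = w ! t"
    have "w ! t \<in> set w" using t by simp
    hence p: "p < n" using sw by (auto simp: p_def)
    define x where "x = take t w"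
    have sx: "set x \<subseteq> {..<n}" using sw set_take_subset[of t w] by (auto simp: x_def)
    have srv: "set (rev v) \<subseteq> {..<n}" using sv by simp
    have ws: "wstate n v u t (rep n y) = rep n (F n (rev v) (F n x y))" for y
      unfolding wstate_def x_def w_def[symmetric]
      using phi_rep[OF n sx[unfolded x_def], of y] phi_rep[OF n srv] by simp
    define a where "a = F n x (int p)"
    define b where "b = F n x (int p + 1)"
    have i: "i = rep n (F n (rev v) a)" using hi ws lowpos_rep[OF n p] by (simp add: a_def p_def)
    have j: "j = rep n (F n (rev v) b)" using hj ws highpos_rep[OF n p] by (simp add: b_def p_def)
    have ab: "a < b" using iw t unfolding ired_def a_def b_def x_def p_def by blast
    define z where "z = take (Suc t) w"
    have z: "z = x @ [p]" using t by (simp add: z_def x_def p_def take_Suc_conv_app_nth)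
    have pm: "int p = int p mod int n" using p by simp
    have za: "F n (rev z) a = int p + 1" using F_inv2[OF n, of x "int p"] sgv(1)[OF n pm]
      by (simp add: z a_def)
    have zb: "F n (rev z) b = int p" using F_inv2[OF n, of x "int p + 1"] sgv(2)[OF n pm]
      by (simp add: z b_def)
    have wz: "w = z @ drop (Suc t) w" by (simp add: z_def)
    have "F n (rev (z @ drop (Suc t) w)) b < F n (rev (z @ drop (Suc t) w)) a"
      using mono_cross[OF n, of z "drop (Suc t) w" a b] iw sw wz ab za zb by simp
    hence cr: "F n (rev w) b < F n (rev w) a" using wz by simp
    have "g (int i) = a - F n (rev w) a" using i grep gX by simp
    moreover have "g (int j) = b - F n (rev w) b" using j grep gX by simp
    ultimately show "real_of_int (g (int i)) < real_of_int (g (int j))" using ab cr by simp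
  qed
qed


end
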